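(* Let $R,r>0$, $q_1=\frac{1}{2r}+\frac{1}{2R}$, and let $K^{-1/2}_0$, $\mathcal{K}^*_{\partial\Omega}$ and $\{\mathbb{E}(t)\}_{t\in[-1/2,1/2]}$ be as in the context (touching disks). Then $$\mathcal{K}^*_{\partial\Omega}=\int_{-1/2}^{1/2}t\,d\mathbb{E}(t),$$ that is, $\langle f,\mathcal{K}^*_{\partial\Omega}[g]\rangle_{-1/2}=\int_{-1/2}^{1/2}t\,d\langle f,\mathbb{E}(t)g\rangle_{-1/2}$ for all $f,g\in K^{-1/2}_0$.
   Context: Setting (touching disks). Identify $\mathbb{R}^2$ with $\mathbb{C}$; for $a\in\mathbb{R}\setminus\{0\}$ let $B_a$ be the open disk of radius $|a|$ centered at $(a,0)$. Fix $R,r>0$, let $\Omega=B_R\cup B_{-r}$ (two externally touching disks), and put $q_1=\frac{1}{2r}+\frac{1}{2R}>0$. For $k\neq0$ let $$\mathbb{S}(k)=\frac{1}{2|k|}\begin{bmatrix}1-e^{-|k|q_1}&0\\0&1+e^{-|k|q_1}\end{bmatrix},\qquad \mathbb{K}(k)=\frac12e^{-|k|q_1}\begin{bmatrix}1&0\\0&-1\end{bmatrix}.$$ $K^{-1/2}_0$ is the Hilbert space of pairs $\hat\varphi=(\hat\varphi_1,\hat\varphi_2)^T$ of measurable complex functions on $\mathbb{R}$ (mod a.e.) with $\int_{\mathbb{R}}\hat\varphi^T\mathbb{S}\overline{\hat\varphi}\,dk<\infty$, with inner product $\langle\psi,\varphi\rangle_{-1/2}=\int_{\mathbb{R}}\hat\psi^T\mathbb{S}\overline{\hat\varphi}\,dk$.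 (In the paper such a pair represents the boundary density $\varphi=U^{-1}P\hat\varphi$ on $\partial\Omega$, with $P=\frac1{\sqrt2}\begin{bmatrix}-1&1\\1&1\end{bmatrix}$ and $U$ the Fourier transform of the density pulled back by $z\mapsto 1/z$ to the lines $x=\frac1{2R}$ and $x=-\frac1{2r}$; one writes $PU\varphi=(\hat\varphi_1,\hat\varphi_2)^T$.) The Neumann–Poincaré operator $\mathcal{K}^*_{\partial\Omega}$ on $K^{-1/2}_0$ is the multiplication operator $\hat\varphi\mapsto\mathbb{K}\hat\varphi$. For $s\in\mathbb{R}\cup\{\infty\}$ let $\mathcal{P}^1(s)(\hat\varphi_1,\hat\varphi_2)=(\chi_{(-\infty,s]}\hat\varphi_1,0)$, $\mathcal{P}^2(s)(\hat\varphi_1,\hat\varphi_2)=(0,\chi_{(-\infty,s]}\hat\varphi_2)$ (with $\chi_{(-\infty,\infty]}\equiv1$), $\mathbb{I}=\mathcal{P}^1(\infty)+\mathcal{P}^2(\infty)$, and $$\mathbb{E}(t)=\begin{cases}\mathcal{P}^2\!\left(-\frac{\ln(-2t)}{q_1}\right)-\mathcal{P}^2\!\left(\frac{\ln(-2t)}{q_1}\right),& t\in[-1/2,0),\\[2pt]\mathcal{P}^1\!\left(\frac{\ln(2t)}{q_1}\right)-\mathcal{P}^1\!\left(-\frac{\ln(2t)}{q_1}\right)+\mathbb{I},& t\in(0,1/2],\end{cases}\qquad \mathbb{E}(0)=\lim_{t\to0^+}\mathbb{E}(t).$$ *)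

theory Defs
  imports "HOL-Analysis.Analysis"
begin

text \<open>An element of K_0^{-1/2} is represented by a pair of functions
  \<phi> = (\<phi>1, \<phi>2) :: real \<Rightarrow> complex \<times> complex (Fourier side).\<close>

definition q1 :: "real \<Rightarrow> real \<Rightarrow> real" where
  "q1 R r = 1 / (2 * r) + 1 / (2 * R)"

definition S11 :: "real \<Rightarrow> real \<Rightarrow> real \<Rightarrow> real" where
  "S11 R r k = (1 / (2 * \<bar>k\<bar>)) * (1 - exp (- \<bar>k\<bar> * q1 R r))"

definition S22 :: "real \<Rightarrow> real \<Rightarrow> real \<Rightarrow> real" where
  "S22 R r k = (1 / (2 * \<bar>k\<bar>)) * (1 + exp (- \<bar>k\<bar> * q1 R r))"

definition K0 :: "real \<Rightarrow> real \<Rightarrow> (real \<Rightarrow> complex \<times> complex) set" where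
  "K0 R r = {\<phi>. (\<lambda>k. fst (\<phi> k)) \<in> borel_measurable lborel \<and>
                 (\<lambda>k. snd (\<phi> k)) \<in> borel_measurable lborel \<and>
                 (\<integral>\<^sup>+ k. ennreal (S11 R r k * (cmod (fst (\<phi> k)))\<^sup>2
                               + S22 R r k * (cmod (snd (\<phi> k)))\<^sup>2) \<partial>lborel) < \<infinity>}"

definition ip :: "real \<Rightarrow> real \<Rightarrow> (real \<Rightarrow> complex \<times> complex) \<Rightarrow> (real \<Rightarrow> complex \<times> complex) \<Rightarrow> complex" where
  "ip R r \<psi> \<phi> = (LINT k|lborel.
       complex_of_real (S11 R r k) * fst (\<psi> k) * cnj (fst (\<phi> k))
     + complex_of_real (S22 R r k) * snd (\<psi> k) * cnj (snd (\<phi> k)))"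

definition NP :: "real \<Rightarrow> real \<Rightarrow> (real \<Rightarrow> complex \<times> complex) \<Rightarrow> (real \<Rightarrow> complex \<times> complex)" where
  "NP R r \<phi> = (\<lambda>k. (complex_of_real (exp (- \<bar>k\<bar> * q1 R r) / 2) * fst (\<phi> k),
                     - complex_of_real (exp (- \<bar>k\<bar> * q1 R r) / 2) * snd (\<phi> k)))"

definition chi :: "real \<Rightarrow> real \<Rightarrow> complex" where
  "chi s k = (if k \<le> s then 1 else 0)"

definition P1 :: "real \<Rightarrow> (real \<Rightarrow> complex \<times> complex) \<Rightarrow> (real \<Rightarrow> complex \<times> complex)" where
  "P1 s \<phi> = (\<lambda>k. (chi s k * fst (\<phi> k), 0))"

definition P2 :: "real \<Rightarrow> (real \<Rightarrow> complex \<times> complex) \<Rightarrow> (real \<Rightarrow> complex \<times> complex)" where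
  "P2 s \<phi> = (\<lambda>k. (0, chi s k * snd (\<phi> k)))"

definition Iop :: "(real \<Rightarrow> complex \<times> complex) \<Rightarrow> (real \<Rightarrow> complex \<times> complex)" where
  "Iop \<phi> = \<phi>"

definition Eop :: "real \<Rightarrow> real \<Rightarrow> real \<Rightarrow> (real \<Rightarrow> complex \<times> complex) \<Rightarrow> (real \<Rightarrow> complex \<times> complex)" where
  "Eop R r t \<phi> =
     (if t < 0 then
        (\<lambda>k. P2 (- ln (-2 * t) / q1 R r) \<phi> k - P2 (ln (-2 * t) / q1 R r) \<phi> k)
      else
        (\<lambda>k. P1 (ln (2 * t) / q1 R r) \<phi> k - P1 (- ln (2 * t) / q1 R r) \<phi> k + Iop \<phi> k))"

definition Eform :: "real \<Rightarrow> real \<Rightarrow> (real \<Rightarrow> complex \<times> complex) \<Rightarrow> (real \<Rightarrow> complex \<times> complex) \<Rightarrow> real \<Rightarrow> complex" where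
  "Eform R r f g t =
     (if t = 0 then Lim (at_right 0) (\<lambda>s. ip R r f (Eop R r s g))
      else ip R r f (Eop R r t g))"

definition RS_has_integral ::
  "(real \<Rightarrow> complex) \<Rightarrow> (real \<Rightarrow> complex) \<Rightarrow> real \<Rightarrow> real \<Rightarrow> complex \<Rightarrow> bool" where
  "RS_has_integral h F a b I \<longleftrightarrow>
     (\<forall>\<epsilon>>0. \<exists>\<delta>>0. \<forall>(n::nat) (x::nat \<Rightarrow> real) (\<xi>::nat \<Rightarrow> real).
        n \<ge> 1 \<and> x 0 = a \<and> x n = b \<and>
        (\<forall>i<n. x i < x (Suc i) \<and> x (Suc i) - x i < \<delta> \<and> x i \<le> \<xi> i \<and> \<xi> i \<le> x (Suc i))
        \<longrightarrow> cmod ((\<Sum>i<n. h (\<xi> i) * (F (x (Suc i)) - F (x i))) - I) < \<epsilon>)"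

end

theory Submission
  imports Defs
begin


definition stp :: "bool \<Rightarrow> real \<Rightarrow> real \<Rightarrow> real" where
  "stp b c t = (if c < t \<or> (b \<and> c = t) then 1 else 0)"

definition aa :: "real \<Rightarrow> real \<Rightarrow> real \<Rightarrow> real" where
  "aa R r k = exp (- \<bar>k\<bar> * q1 R r) / 2"

definition sg1 where "sg1 R r t k = stp (k \<le> 0) (aa R r k) t"
definition sg2 where "sg2 R r t k = stp (0 < k) (- aa R r k) t"

lemma q1_pos: "R > 0 \<Longrightarrow> r > 0 \<Longrightarrow> q1 R r > 0"
  unfolding q1_def by (intro add_pos_pos) simp_all

lemma le_negln_div:
  fixes k q u :: real
  assumes q: "q > 0" and u: "u > 0"
  shows "(k \<le> - ln u / q) \<longleftrightarrow> u \<le> exp (- k * q)"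
proof -
  have "(k \<le> - ln u / q) \<longleftrightarrow> k * q \<le> - ln u" by (metis pos_le_divide_eq q)
  also have "\<dots> \<longleftrightarrow> ln u \<le> - k * q" by linarith
  also have "\<dots> \<longleftrightarrow> ln u \<le> ln (exp (- k * q))" by simp
  also have "\<dots> \<longleftrightarrow> u \<le> exp (- k * q)" using u by (subst ln_le_cancel_iff) auto
  finally show ?thesis .
qed

lemma le_ln_div:
  fixes k q u :: real
  assumes q: "q > 0" and u: "u > 0"
  shows "(k \<le> ln u / q) \<longleftrightarrow> exp (k * q) \<le> u"
proof -
  have "(k \<le> ln u / q) \<longleftrightarrow> k * q \<le> ln u" by (metis pos_le_divide_eq q)
  also have "\<dots> \<longleftrightarrow> ln (exp (k * q)) \<le> ln u" by simp
  also have "\<dots> \<longleftrightarrow> exp (k * q) \<le> u" using u by (subst ln_le_cancel_iff) auto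
  finally show ?thesis .
qed

lemma Eop_eq:
  assumes R: "R > 0" and r: "r > 0" and t: "-1/2 \<le> t" "t \<le> 1/2" "t \<noteq> 0"
  shows "Eop R r t g k = (complex_of_real (sg1 R r t k) * fst (g k),
                          complex_of_real (sg2 R r t k) * snd (g k))"
proof -
  define q where "q = q1 R r"
  have q: "q > 0" using q1_pos[OF R r] q_def by simp
  have e1: "exp (\<bar>k\<bar> * q) \<ge> 1" using q by simp
  have e2: "exp (- \<bar>k\<bar> * q) \<le> 1" using q by simp
  have e3: "k \<noteq> 0 \<Longrightarrow> exp (\<bar>k\<bar> * q) > 1" using q by simp
  have e4: "k \<noteq> 0 \<Longrightarrow> exp (- \<bar>k\<bar> * q) < 1" using q by simp
  have ep: "exp (- \<bar>k\<bar> * q) > 0" by simp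
  have f1: "k > 0 \<Longrightarrow> exp (k * q) > 1" using q by simp
  have f2: "k > 0 \<Longrightarrow> exp (- (k * q)) < 1" using q by simp
  have f3: "k < 0 \<Longrightarrow> exp (- (k * q)) > 1" using q by (simp add: mult_neg_pos)
  have f4: "k < 0 \<Longrightarrow> exp (k * q) < 1" using q by (simp add: mult_neg_pos)
  show ?thesis
  proof (cases "t < 0")
    case True
    have u: "-2 * t > 0" using True by simp
    have A: "chi (- ln (-2 * t) / q) k - chi (ln (-2 * t) / q) k = complex_of_real (sg2 R r t k)"
      unfolding chi_def le_negln_div[OF q u] le_ln_div[OF q u] sg2_def stp_def aa_def q_def[symmetric]
      using f1 f2 f3 f4 ep t True
      apply (cases "k > 0"; cases "k = 0")
      apply (simp_all add: abs_if)
      apply (auto split: if_split)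
      apply (use f1 f2 f3 f4 in linarith)+
      done
    have "aa R r k > 0" by (simp add: aa_def)
    then have B: "sg1 R r t k = 0" unfolding sg1_def stp_def using True by auto
    show ?thesis using True A B unfolding Eop_def P2_def q_def[symmetric]
      by (simp add: algebra_simps flip: A)
  next
    case False
    have u: "2 * t > 0" using False t by simp
    have A: "chi (ln (2 * t) / q) k - chi (- ln (2 * t) / q) k + 1 = complex_of_real (sg1 R r t k)"
      unfolding chi_def le_negln_div[OF q u] le_ln_div[OF q u] sg1_def stp_def aa_def q_def[symmetric]
      using f1 f2 f3 f4 ep t False
      apply (cases "k > 0"; cases "k = 0")
      apply (simp_all add: abs_if)
      apply (auto split: if_split)
      apply (use f1 f2 f3 f4 in linarith)+
      done
    have "aa R r k > 0" by (simp add: aa_def)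
    then have B: "sg2 R r t k = 1" unfolding sg2_def stp_def using False t by auto
    show ?thesis using False A B unfolding Eop_def P1_def Iop_def q_def[symmetric]
      by (simp add: algebra_simps prod_eq_iff flip: A)
  qed
qed




lemma stp_mono: "t \<le> t' \<Longrightarrow> stp b c t \<le> stp b c t'"
  unfolding stp_def by auto

lemma stp_01: "stp b c t = 0 \<or> stp b c t = 1"
  unfolding stp_def by auto

lemma step_sum:
  fixes x xi :: "nat \<Rightarrow> real"
  assumes mono: "\<forall>i<n. x i \<le> x (Suc i) \<and> x (Suc i) - x i \<le> d \<and> x i \<le> xi i \<and> xi i \<le> x (Suc i)"
    and s0: "stp b c (x 0) = 0" and sn: "stp b c (x n) = 1"
  shows "\<bar>(\<Sum>i<n. xi i * (stp b c (x (Suc i)) - stp b c (x i))) - c\<bar> \<le> d"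
proof -
  define D where "D i = stp b c (x (Suc i)) - stp b c (x i)" for i
  have sD: "(\<Sum>i<n. D i) = 1" unfolding D_def using sum_lessThan_telescope[of "\<lambda>i. stp b c (x i)" n] s0 sn by simp
  have "(\<Sum>i<n. xi i * D i) - c = (\<Sum>i<n. xi i * D i) - c * (\<Sum>i<n. D i)" using sD by simp
  also have "\<dots> = (\<Sum>i<n. (xi i - c) * D i)" by (simp add: sum_distrib_left sum_subtractf algebra_simps)
  finally have eq: "(\<Sum>i<n. xi i * D i) - c = (\<Sum>i<n. (xi i - c) * D i)" .
  have tm: "\<bar>(xi i - c) * D i\<bar> \<le> d * D i" if i: "i < n" for i
  proof -
    have m: "x i \<le> x (Suc i)" "x (Suc i) - x i \<le> d" "x i \<le> xi i" "xi i \<le> x (Suc i)" using mono i by auto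
    have Dn: "D i \<ge> 0" unfolding D_def using stp_mono[OF m(1), of b c] by simp
    show ?thesis
    proof (cases "D i = 0")
      case True then show ?thesis by simp
    next
      case False
      then have "stp b c (x i) = 0" "stp b c (x (Suc i)) = 1"
        using stp_01[of b c "x i"] stp_01[of b c "x (Suc i)"] Dn unfolding D_def by auto
      then have "x i \<le> c" "c \<le> x (Suc i)" unfolding stp_def by (auto split: if_splits)
      then have "\<bar>xi i - c\<bar> \<le> d" using m by linarith
      then show ?thesis using Dn by (simp add: abs_mult mult_right_mono)
    qed
  qed
  have "\<bar>\<Sum>i<n. (xi i - c) * D i\<bar> \<le> (\<Sum>i<n. \<bar>(xi i - c) * D i\<bar>)" by (rule sum_abs)
  also have "\<dots> \<le> (\<Sum>i<n. d * D i)" by (intro sum_mono tm) simp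
  also have "\<dots> = d" using sD by (simp add: sum_distrib_left[symmetric])
  finally show ?thesis using eq unfolding D_def by simp
qed

lemma cnj_meas[measurable]: "f \<in> borel_measurable M \<Longrightarrow> (\<lambda>x. cnj (f x)) \<in> borel_measurable M"
  by (rule borel_measurable_continuous_on) (auto intro: continuous_on_cnj continuous_on_id)

lemma S11_nonneg: "R > 0 \<Longrightarrow> r > 0 \<Longrightarrow> S11 R r k \<ge> 0"
  using q1_pos[of R r] unfolding S11_def by (intro mult_nonneg_nonneg) (auto simp: mult_nonneg_nonneg)

lemma S22_nonneg: "S22 R r k \<ge> 0"
  unfolding S22_def by (intro mult_nonneg_nonneg) (auto simp: add_nonneg_nonneg)

lemma S11_meas[measurable]: "S11 R r \<in> borel_measurable lborel"
  unfolding S11_def by measurable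

lemma S22_meas[measurable]: "S22 R r \<in> borel_measurable lborel"
  unfolding S22_def by measurable

definition En where "En R r f k = S11 R r k * (cmod (fst (f k)))\<^sup>2 + S22 R r k * (cmod (snd (f k)))\<^sup>2"

lemma En_int:
  assumes R: "R > 0" and r: "r > 0" and f: "f \<in> K0 R r"
  shows "integrable lborel (En R r f)"
proof -
  have m1[measurable]: "(\<lambda>k. fst (f k)) \<in> borel_measurable lborel" and m2[measurable]: "(\<lambda>k. snd (f k)) \<in> borel_measurable lborel"
    and fin: "(\<integral>\<^sup>+ k. ennreal (En R r f k) \<partial>lborel) < \<infinity>"
    using f unfolding K0_def En_def by auto
  have nn: "En R r f k \<ge> 0" for k unfolding En_def using S11_nonneg[OF R r, of k] S22_nonneg[of R r k]
    by (intro add_nonneg_nonneg mult_nonneg_nonneg) auto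
  show ?thesis
  proof (rule integrableI_bounded)
    show "En R r f \<in> borel_measurable lborel" unfolding En_def by measurable
    show "(\<integral>\<^sup>+ k. ennreal (norm (En R r f k)) \<partial>lborel) < \<infinity>" using fin nn by simp
  qed
qed

definition W1 where "W1 R r f g k = complex_of_real (S11 R r k) * fst (f k) * cnj (fst (g k))"
definition W2 where "W2 R r f g k = complex_of_real (S22 R r k) * snd (f k) * cnj (snd (g k))"

lemma W_int:
  assumes R: "R > 0" and r: "r > 0" and f: "f \<in> K0 R r" and g: "g \<in> K0 R r"
  shows "integrable lborel (W1 R r f g)" "integrable lborel (W2 R r f g)"
proof -
  have [measurable]: "(\<lambda>k. fst (f k)) \<in> borel_measurable lborel" "(\<lambda>k. snd (f k)) \<in> borel_measurable lborel"
     "(\<lambda>k. fst (g k)) \<in> borel_measurable lborel" "(\<lambda>k. snd (g k)) \<in> borel_measurable lborel"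
    using f g unfolding K0_def by auto
  have I: "integrable lborel (\<lambda>k. En R r f k + En R r g k)" using En_int[OF R r f] En_int[OF R r g] by simp
  have amgm: "a * b \<le> (a\<^sup>2 + b\<^sup>2)" if "a \<ge> 0" "b \<ge> 0" for a b :: real
  proof -
    have "0 \<le> (a - b)\<^sup>2" by simp
    then have "2 * (a * b) \<le> a\<^sup>2 + b\<^sup>2" by (simp add: power2_diff algebra_simps)
    moreover have "0 \<le> a * b" using that by simp
    ultimately show ?thesis by linarith
  qed
  have nn: "En R r h k \<ge> 0" for h k unfolding En_def using S11_nonneg[OF R r, of k] S22_nonneg[of R r k]
    by (intro add_nonneg_nonneg mult_nonneg_nonneg) auto
  show "integrable lborel (W1 R r f g)"
  proof (rule Bochner_Integration.integrable_bound[OF I])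
    show "W1 R r f g \<in> borel_measurable lborel" unfolding W1_def by measurable
    show "AE k in lborel. norm (W1 R r f g k) \<le> norm (En R r f k + En R r g k)"
    proof (rule AE_I2)
      fix k
      have s: "S11 R r k \<ge> 0" "S22 R r k \<ge> 0" using S11_nonneg[OF R r] S22_nonneg by auto
      have "norm (W1 R r f g k) = S11 R r k * (cmod (fst (f k)) * cmod (fst (g k)))"
        unfolding W1_def using s by (simp add: norm_mult)
      also have "\<dots> \<le> S11 R r k * ((cmod (fst (f k)))\<^sup>2 + (cmod (fst (g k)))\<^sup>2)"
        using s by (intro mult_left_mono amgm) auto
      also have "\<dots> \<le> En R r f k + En R r g k" unfolding En_def using s
        by (simp add: algebra_simps add_nonneg_nonneg)
      also have "\<dots> = norm (En R r f k + En R r g k)" using nn[of f k] nn[of g k] by simp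
      finally show "norm (W1 R r f g k) \<le> norm (En R r f k + En R r g k)" .
    qed
  qed
  show "integrable lborel (W2 R r f g)"
  proof (rule Bochner_Integration.integrable_bound[OF I])
    show "W2 R r f g \<in> borel_measurable lborel" unfolding W2_def by measurable
    show "AE k in lborel. norm (W2 R r f g k) \<le> norm (En R r f k + En R r g k)"
    proof (rule AE_I2)
      fix k
      have s: "S11 R r k \<ge> 0" "S22 R r k \<ge> 0" using S11_nonneg[OF R r] S22_nonneg by auto
      have "norm (W2 R r f g k) = S22 R r k * (cmod (snd (f k)) * cmod (snd (g k)))"
        unfolding W2_def using s by (simp add: norm_mult)
      also have "\<dots> \<le> S22 R r k * ((cmod (snd (f k)))\<^sup>2 + (cmod (snd (g k)))\<^sup>2)"
        using s by (intro mult_left_mono amgm) auto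
      also have "\<dots> \<le> En R r f k + En R r g k" unfolding En_def using s
        by (simp add: algebra_simps add_nonneg_nonneg)
      also have "\<dots> = norm (En R r f k + En R r g k)" using nn[of f k] nn[of g k] by simp
      finally show "norm (W2 R r f g k) \<le> norm (En R r f k + En R r g k)" .
    qed
  qed
qed




lemma sg1_meas[measurable]: "(\<lambda>k. sg1 R r t k) \<in> borel_measurable lborel"
  unfolding sg1_def stp_def aa_def by measurable

lemma sg2_meas[measurable]: "(\<lambda>k. sg2 R r t k) \<in> borel_measurable lborel"
  unfolding sg2_def stp_def aa_def by measurable

lemma aa_meas[measurable]: "aa R r \<in> borel_measurable lborel"
  unfolding aa_def by measurable

lemma aa_pos: "aa R r k > 0" unfolding aa_def by simp

lemma aa_le: "R > 0 \<Longrightarrow> r > 0 \<Longrightarrow> aa R r k \<le> 1/2"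
  using q1_pos[of R r] unfolding aa_def by simp

lemma aa_half: "R > 0 \<Longrightarrow> r > 0 \<Longrightarrow> aa R r k = 1/2 \<Longrightarrow> k = 0"
  using q1_pos[of R r] unfolding aa_def by (auto simp: mult_pos_pos)

lemma sg_abs: "\<bar>sg1 R r t k\<bar> \<le> 1" "\<bar>sg2 R r t k\<bar> \<le> 1"
  unfolding sg1_def sg2_def stp_def by auto

lemma sg_int:
  assumes "integrable lborel W" "W \<in> borel_measurable lborel"
  shows "integrable lborel (\<lambda>k. complex_of_real (sg1 R r t k) * W k)"
        "integrable lborel (\<lambda>k. complex_of_real (sg2 R r t k) * W k)"
proof -
  show "integrable lborel (\<lambda>k. complex_of_real (sg1 R r t k) * W k)"
  proof (rule Bochner_Integration.integrable_bound[OF assms(1)])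
    show "(\<lambda>k. complex_of_real (sg1 R r t k) * W k) \<in> borel_measurable lborel" using assms(2) by measurable
    show "AE k in lborel. norm (complex_of_real (sg1 R r t k) * W k) \<le> norm (W k)"
      using sg_abs(1)[of R r t] by (intro AE_I2) (simp add: norm_mult mult_left_le_one_le)
  qed
  show "integrable lborel (\<lambda>k. complex_of_real (sg2 R r t k) * W k)"
  proof (rule Bochner_Integration.integrable_bound[OF assms(1)])
    show "(\<lambda>k. complex_of_real (sg2 R r t k) * W k) \<in> borel_measurable lborel" using assms(2) by measurable
    show "AE k in lborel. norm (complex_of_real (sg2 R r t k) * W k) \<le> norm (W k)"
      using sg_abs(2)[of R r t] by (intro AE_I2) (simp add: norm_mult mult_left_le_one_le)
  qed
qed

lemma part_mono:
  fixes x :: "nat \<Rightarrow> real"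
  assumes "\<forall>i<n. x i \<le> x (Suc i)"
  shows "i \<le> j \<Longrightarrow> j \<le> n \<Longrightarrow> x i \<le> x j"
proof (induction j)
  case 0 then show ?case by simp
next
  case (Suc j)
  show ?case
  proof (cases "i = Suc j")
    case True then show ?thesis by simp
  next
    case False
    then have "x i \<le> x j" using Suc by simp
    also have "x j \<le> x (Suc j)" using assms Suc.prems by simp
    finally show ?thesis .
  qed
qed

lemma sg_ends:
  assumes R: "R > 0" and r: "r > 0"
  shows "sg1 R r (-1/2) k = 0" "sg1 R r (1/2) k = 1" "sg2 R r (-1/2) k = 0" "sg2 R r (1/2) k = 1"
proof -
  have p: "aa R r k > 0" "aa R r k \<le> 1/2" using aa_pos aa_le[OF R r] by auto
  have h: "aa R r k = 1/2 \<Longrightarrow> k = 0" using aa_half[OF R r] by auto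
  show "sg1 R r (-1/2) k = 0" unfolding sg1_def stp_def using p by auto
  show "sg1 R r (1/2) k = 1" unfolding sg1_def stp_def using p h by (cases "aa R r k = 1/2") auto
  show "sg2 R r (-1/2) k = 0" unfolding sg2_def stp_def using p h by (cases "aa R r k = 1/2") auto
  show "sg2 R r (1/2) k = 1" unfolding sg2_def stp_def using p by auto
qed




definition hh where
  "hh R r f g t k = complex_of_real (sg1 R r t k) * W1 R r f g k + complex_of_real (sg2 R r t k) * W2 R r f g k"

lemma W_meas:
  assumes f: "f \<in> K0 R r" and g: "g \<in> K0 R r"
  shows "W1 R r f g \<in> borel_measurable lborel" "W2 R r f g \<in> borel_measurable lborel"
proof -
  have [measurable]: "(\<lambda>k. fst (f k)) \<in> borel_measurable lborel" "(\<lambda>k. snd (f k)) \<in> borel_measurable lborel"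
     "(\<lambda>k. fst (g k)) \<in> borel_measurable lborel" "(\<lambda>k. snd (g k)) \<in> borel_measurable lborel"
    using f g unfolding K0_def by auto
  show "W1 R r f g \<in> borel_measurable lborel"
    unfolding W1_def by measurable
  show "W2 R r f g \<in> borel_measurable lborel"
    unfolding W2_def by measurable
qed

lemma hh_int:
  assumes R: "R > 0" and r: "r > 0" and f: "f \<in> K0 R r" and g: "g \<in> K0 R r"
  shows "integrable lborel (hh R r f g t)"
proof -
  have "integrable lborel (\<lambda>k. complex_of_real (sg1 R r t k) * W1 R r f g k)"
    by (rule sg_int(1)) (use W_int[OF R r f g] W_meas[OF f g] in auto)
  moreover have "integrable lborel (\<lambda>k. complex_of_real (sg2 R r t k) * W2 R r f g k)"
    by (rule sg_int(2)) (use W_int[OF R r f g] W_meas[OF f g] in auto)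
  ultimately show ?thesis unfolding hh_def by (rule Bochner_Integration.integrable_add)
qed

lemma ipE:
  assumes R: "R > 0" and r: "r > 0" and t: "-1/2 \<le> t" "t \<le> 1/2" "t \<noteq> 0"
  shows "ip R r f (Eop R r t g) = integral\<^sup>L lborel (hh R r f g t)"
  unfolding ip_def hh_def W1_def W2_def Eop_eq[OF R r t]
  by (intro Bochner_Integration.integral_cong refl) (simp only: fst_conv snd_conv complex_cnj_mult complex_cnj_complex_of_real complex_cnj_minus complex_cnj_divide; simp add: ac_simps)

lemma ipNP:
  shows "ip R r f (NP R r g) = integral\<^sup>L lborel (\<lambda>k. complex_of_real (aa R r k) * W1 R r f g k - complex_of_real (aa R r k) * W2 R r f g k)"
  unfolding ip_def NP_def W1_def W2_def aa_def
  by (intro Bochner_Integration.integral_cong refl) (simp only: fst_conv snd_conv complex_cnj_mult complex_cnj_complex_of_real complex_cnj_minus complex_cnj_divide; simp add: ac_simps)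

lemma hh0: "hh R r f g 0 k = W2 R r f g k"
  using aa_pos[of R r k] unfolding hh_def sg1_def sg2_def stp_def by auto

lemma Eform0:
  assumes R: "R > 0" and r: "r > 0" and f: "f \<in> K0 R r" and g: "g \<in> K0 R r"
  shows "Eform R r f g 0 = integral\<^sup>L lborel (hh R r f g 0)"
proof -
  have I1: "integrable lborel (W1 R r f g)" and I2: "integrable lborel (W2 R r f g)" using W_int[OF R r f g] by auto
  have M1: "W1 R r f g \<in> borel_measurable lborel" using W_meas[OF f g] by auto
  define G where "G s = integral\<^sup>L lborel (\<lambda>k. complex_of_real (sg1 R r s k) * W1 R r f g k)" for s
  have ev: "eventually (\<lambda>s. G s + integral\<^sup>L lborel (W2 R r f g) = ip R r f (Eop R r s g)) (at_right 0)"
  proof -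
    have "eventually (\<lambda>s. s \<in> {0<..<1/2}) (at_right (0::real))"
      by (rule eventually_at_right_real) simp
    then show ?thesis
    proof (rule eventually_mono)
      fix s :: real assume s: "s \<in> {0<..<1/2}"
      have "sg2 R r s k = 1" for k using aa_pos[of R r k] s unfolding sg2_def stp_def by auto
      then have "hh R r f g s = (\<lambda>k. complex_of_real (sg1 R r s k) * W1 R r f g k + W2 R r f g k)"
        unfolding hh_def by auto
      then have "integral\<^sup>L lborel (hh R r f g s) = G s + integral\<^sup>L lborel (W2 R r f g)"
        unfolding G_def by (simp add: Bochner_Integration.integral_add sg_int[OF I1 M1] I2)
      moreover have "ip R r f (Eop R r s g) = integral\<^sup>L lborel (hh R r f g s)"
        using s by (intro ipE[OF R r]) auto
      ultimately show "G s + integral\<^sup>L lborel (W2 R r f g) = ip R r f (Eop R r s g)" by simp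
    qed
  qed
  have G0: "(G \<longlongrightarrow> 0) (at_right 0)"
    unfolding filterlim_at_right_to_top G_def
  proof (rule integral_dominated_convergence_at_top[where w="\<lambda>k. norm (W1 R r f g k)" and f="\<lambda>k. 0", simplified])
    show "\<And>t. (\<lambda>k. complex_of_real (sg1 R r (inverse t) k) * W1 R r f g k) \<in> borel_measurable lborel"
      using M1 by measurable
    show "integrable lborel (\<lambda>k. norm (W1 R r f g k))" using I1 by simp
    show "AE k in lborel. ((\<lambda>t. complex_of_real (sg1 R r (inverse t) k) * W1 R r f g k) \<longlongrightarrow> 0) at_top"
    proof (rule AE_I2)
      fix k
      have "eventually (\<lambda>t. t > inverse (aa R r k)) at_top" by (rule eventually_gt_at_top)
      then have "eventually (\<lambda>t. complex_of_real (sg1 R r (inverse t) k) * W1 R r f g k = 0) at_top"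
      proof (rule eventually_mono)
        fix t assume t: "t > inverse (aa R r k)"
        have ap: "aa R r k > 0" by (rule aa_pos)
        then have "inverse t < aa R r k" using t
          by (metis inverse_inverse_eq inverse_less_iff_less inverse_positive_iff_positive less_trans)
        then show "complex_of_real (sg1 R r (inverse t) k) * W1 R r f g k = 0"
          unfolding sg1_def stp_def by auto
      qed
      then show "((\<lambda>t. complex_of_real (sg1 R r (inverse t) k) * W1 R r f g k) \<longlongrightarrow> 0) at_top"
        by (rule tendsto_eventually)
    qed
    show "\<forall>\<^sub>F t in at_top. AE k in lborel. norm (complex_of_real (sg1 R r (inverse t) k) * W1 R r f g k) \<le> norm (W1 R r f g k)"
      using sg_abs(1)[of R r] by (intro always_eventually allI AE_I2) (simp add: norm_mult mult_left_le_one_le)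
  qed
  have "((\<lambda>s. ip R r f (Eop R r s g)) \<longlongrightarrow> 0 + integral\<^sup>L lborel (W2 R r f g)) (at_right 0)"
    using tendsto_add[OF G0 tendsto_const] ev by (rule Lim_transform_eventually)
  then have "Lim (at_right 0) (\<lambda>s. ip R r f (Eop R r s g)) = integral\<^sup>L lborel (W2 R r f g)"
    by (intro tendsto_Lim) (auto simp: trivial_limit_at_right_real)
  then show ?thesis unfolding Eform_def hh0 by simp
qed

lemma Eform_eq:
  assumes R: "R > 0" and r: "r > 0" and f: "f \<in> K0 R r" and g: "g \<in> K0 R r"
    and t: "-1/2 \<le> t" "t \<le> 1/2"
  shows "Eform R r f g t = integral\<^sup>L lborel (hh R r f g t)"
proof (cases "t = 0")
  case True then show ?thesis using Eform0[OF R r f g] by simp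
next
  case False then show ?thesis unfolding Eform_def using ipE[OF R r t False] by simp
qed




lemma main_RS:
  fixes R r :: real
  assumes R: "R > 0" and r: "r > 0" and f: "f \<in> K0 R r" and g: "g \<in> K0 R r"
  shows "RS_has_integral (\<lambda>t. complex_of_real t) (Eform R r f g) (-1/2) (1/2) (ip R r f (NP R r g))"
  unfolding RS_has_integral_def
proof (intro allI impI)
  fix \<epsilon> :: real assume e: "\<epsilon> > 0"
  define W1' where "W1' = W1 R r f g"
  define W2' where "W2' = W2 R r f g"
  have I1: "integrable lborel W1'" and I2: "integrable lborel W2'" using W_int[OF R r f g] W1'_def W2'_def by auto
  have M1: "W1' \<in> borel_measurable lborel" and M2: "W2' \<in> borel_measurable lborel" using W_meas[OF f g] W1'_def W2'_def by auto
  define C where "C = integral\<^sup>L lborel (\<lambda>k. norm (W1' k) + norm (W2' k))"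
  have IC: "integrable lborel (\<lambda>k. norm (W1' k) + norm (W2' k))" using I1 I2 by simp
  have C0: "C \<ge> 0" unfolding C_def by (intro integral_nonneg_AE AE_I2) simp
  define \<delta> where "\<delta> = \<epsilon> / (C + 1)"
  have d0: "\<delta> > 0" unfolding \<delta>_def using e C0 by simp
  have dC: "\<delta> * C < \<epsilon>"
  proof -
    have "\<delta> * C = \<epsilon> * (C / (C + 1))" unfolding \<delta>_def by simp
    also have "\<dots> < \<epsilon> * 1" using e C0 by (intro mult_strict_left_mono) auto
    finally show ?thesis by simp
  qed
  show "\<exists>\<delta>>0. \<forall>(n::nat) (x::nat \<Rightarrow> real) (\<xi>::nat \<Rightarrow> real).
        n \<ge> 1 \<and> x 0 = -1/2 \<and> x n = 1/2 \<and>
        (\<forall>i<n. x i < x (Suc i) \<and> x (Suc i) - x i < \<delta> \<and> x i \<le> \<xi> i \<and> \<xi> i \<le> x (Suc i))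
        \<longrightarrow> cmod ((\<Sum>i<n. complex_of_real (\<xi> i) * (Eform R r f g (x (Suc i)) - Eform R r f g (x i))) - ip R r f (NP R r g)) < \<epsilon>"
  proof (intro exI[of _ \<delta>] conjI d0 allI impI)
    fix n :: nat and x \<xi> :: "nat \<Rightarrow> real"
    assume H: "n \<ge> 1 \<and> x 0 = -1/2 \<and> x n = 1/2 \<and>
        (\<forall>i<n. x i < x (Suc i) \<and> x (Suc i) - x i < \<delta> \<and> x i \<le> \<xi> i \<and> \<xi> i \<le> x (Suc i))"
    have x0: "x 0 = -1/2" and xn: "x n = 1/2" using H by auto
    have P: "\<forall>i<n. x i \<le> x (Suc i) \<and> x (Suc i) - x i \<le> \<delta> \<and> x i \<le> \<xi> i \<and> \<xi> i \<le> x (Suc i)"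
      using H by (auto simp: less_imp_le)
    have xmono: "\<forall>i<n. x i \<le> x (Suc i)" using P by auto
    have xr: "-1/2 \<le> x i \<and> x i \<le> 1/2" if "i \<le> n" for i
      using part_mono[OF xmono, of 0 i] part_mono[OF xmono, of i n] that x0 xn by auto
    have EF: "Eform R r f g (x i) = integral\<^sup>L lborel (hh R r f g (x i))" if "i \<le> n" for i
      using xr[OF that] by (intro Eform_eq[OF R r f g]) auto
    define D1 where "D1 k = (\<Sum>i<n. \<xi> i * (sg1 R r (x (Suc i)) k - sg1 R r (x i) k))" for k
    define D2 where "D2 k = (\<Sum>i<n. \<xi> i * (sg2 R r (x (Suc i)) k - sg2 R r (x i) k))" for k
    have hint: "integrable lborel (hh R r f g t)" for t by (rule hh_int[OF R r f g])
    have "(\<Sum>i<n. complex_of_real (\<xi> i) * (Eform R r f g (x (Suc i)) - Eform R r f g (x i)))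
        = (\<Sum>i<n. integral\<^sup>L lborel (\<lambda>k. complex_of_real (\<xi> i) * (hh R r f g (x (Suc i)) k - hh R r f g (x i) k)))"
    proof (rule sum.cong[OF refl])
      fix i assume "i \<in> {..<n}"
      then have "i \<le> n" "Suc i \<le> n" by auto
      then show "complex_of_real (\<xi> i) * (Eform R r f g (x (Suc i)) - Eform R r f g (x i)) =
          integral\<^sup>L lborel (\<lambda>k. complex_of_real (\<xi> i) * (hh R r f g (x (Suc i)) k - hh R r f g (x i) k))"
        using EF hint by (simp add: Bochner_Integration.integral_diff)
    qed
    also have "\<dots> = integral\<^sup>L lborel (\<lambda>k. \<Sum>i<n. complex_of_real (\<xi> i) * (hh R r f g (x (Suc i)) k - hh R r f g (x i) k))"
      by (rule Bochner_Integration.integral_sum[symmetric]) (use hint in auto)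
    also have "\<dots> = integral\<^sup>L lborel (\<lambda>k. complex_of_real (D1 k) * W1' k + complex_of_real (D2 k) * W2' k)"
    proof (rule Bochner_Integration.integral_cong[OF refl])
      fix k
      have "(\<Sum>i<n. complex_of_real (\<xi> i) * (hh R r f g (x (Suc i)) k - hh R r f g (x i) k))
        = (\<Sum>i<n. complex_of_real (\<xi> i * (sg1 R r (x (Suc i)) k - sg1 R r (x i) k)) * W1' k
                 + complex_of_real (\<xi> i * (sg2 R r (x (Suc i)) k - sg2 R r (x i) k)) * W2' k)"
        unfolding hh_def W1'_def W2'_def by (intro sum.cong refl) (simp add: algebra_simps)
      also have "\<dots> = complex_of_real (D1 k) * W1' k + complex_of_real (D2 k) * W2' k"
        unfolding D1_def D2_def sum.distrib of_real_sum sum_distrib_right ..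
      finally show "(\<Sum>i<n. complex_of_real (\<xi> i) * (hh R r f g (x (Suc i)) k - hh R r f g (x i) k))
        = complex_of_real (D1 k) * W1' k + complex_of_real (D2 k) * W2' k" .
    qed
    finally have S: "(\<Sum>i<n. complex_of_real (\<xi> i) * (Eform R r f g (x (Suc i)) - Eform R r f g (x i)))
        = integral\<^sup>L lborel (\<lambda>k. complex_of_real (D1 k) * W1' k + complex_of_real (D2 k) * W2' k)" .
    have NPe: "ip R r f (NP R r g) = integral\<^sup>L lborel (\<lambda>k. complex_of_real (aa R r k) * W1' k - complex_of_real (aa R r k) * W2' k)"
      unfolding W1'_def W2'_def by (rule ipNP)
    have bD1: "\<bar>D1 k - aa R r k\<bar> \<le> \<delta>" for k
      unfolding D1_def sg1_def using step_sum[OF P, of "k \<le> 0" "aa R r k"] sg_ends[OF R r, of k] x0 xn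
      unfolding sg1_def by simp
    have bD2: "\<bar>D2 k + aa R r k\<bar> \<le> \<delta>" for k
      unfolding D2_def sg2_def using step_sum[OF P, of "0 < k" "- aa R r k"] sg_ends[OF R r, of k] x0 xn
      unfolding sg2_def by simp
    have D1m: "D1 \<in> borel_measurable lborel" unfolding D1_def by measurable
    have D2m: "D2 \<in> borel_measurable lborel" unfolding D2_def by measurable
    have aam: "aa R r \<in> borel_measurable lborel" by measurable
    have bnd: "norm (complex_of_real (D1 k - aa R r k) * W1' k + complex_of_real (D2 k + aa R r k) * W2' k)
        \<le> \<delta> * (norm (W1' k) + norm (W2' k))" for k
    proof -
      have "norm (complex_of_real (D1 k - aa R r k) * W1' k + complex_of_real (D2 k + aa R r k) * W2' k)
         \<le> \<bar>D1 k - aa R r k\<bar> * norm (W1' k) + \<bar>D2 k + aa R r k\<bar> * norm (W2' k)"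
        by (rule order_trans[OF norm_triangle_ineq]) (simp add: norm_mult del: of_real_diff of_real_add)
      also have "\<dots> \<le> \<delta> * norm (W1' k) + \<delta> * norm (W2' k)"
        using bD1[of k] bD2[of k] by (intro add_mono mult_right_mono) auto
      finally show ?thesis by (simp add: algebra_simps)
    qed
    define IF where "IF k = complex_of_real (D1 k - aa R r k) * W1' k + complex_of_real (D2 k + aa R r k) * W2' k" for k
    define AF where "AF k = complex_of_real (aa R r k) * W1' k - complex_of_real (aa R r k) * W2' k" for k
    have IC': "integrable lborel (\<lambda>k. \<delta> * (norm (W1' k) + norm (W2' k)))" using IC by simp
    have Iint: "integrable lborel IF"
    proof (rule Bochner_Integration.integrable_bound[OF IC'])
      show "IF \<in> borel_measurable lborel"
        unfolding IF_def using D1m D2m aam M1 M2 by measurable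
      show "AE k in lborel. norm (IF k) \<le> norm (\<delta> * (norm (W1' k) + norm (W2' k)))"
        using bnd d0 unfolding IF_def by (intro AE_I2) (simp add: abs_of_nonneg)
    qed
    have Aint: "integrable lborel AF"
    proof (rule Bochner_Integration.integrable_bound[OF IC])
      show "AF \<in> borel_measurable lborel"
        unfolding AF_def using aam M1 M2 by measurable
      show "AE k in lborel. norm (AF k) \<le> norm (norm (W1' k) + norm (W2' k))"
      proof (rule AE_I2)
        fix k
        have a: "0 < aa R r k" "aa R r k \<le> 1/2" using aa_pos aa_le[OF R r] by auto
        have "norm (AF k) \<le> aa R r k * norm (W1' k) + aa R r k * norm (W2' k)"
          unfolding AF_def using a by (rule_tac order_trans[OF norm_triangle_ineq4]) (simp add: norm_mult)
        also have "\<dots> \<le> 1 * norm (W1' k) + 1 * norm (W2' k)"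
          using a by (intro add_mono mult_right_mono) auto
        finally show "norm (AF k) \<le> norm (norm (W1' k) + norm (W2' k))" by simp
      qed
    qed
    have eqf: "(\<lambda>k. complex_of_real (D1 k) * W1' k + complex_of_real (D2 k) * W2' k) = (\<lambda>k. IF k + AF k)"
      unfolding IF_def AF_def by (rule ext) (simp add: algebra_simps)
    have "(\<Sum>i<n. complex_of_real (\<xi> i) * (Eform R r f g (x (Suc i)) - Eform R r f g (x i))) - ip R r f (NP R r g)
        = integral\<^sup>L lborel IF"
      unfolding S NPe eqf AF_def[symmetric]
      using Iint Aint by (simp add: Bochner_Integration.integral_add)
    also have "cmod \<dots> \<le> integral\<^sup>L lborel (\<lambda>k. \<delta> * (norm (W1' k) + norm (W2' k)))"
      using Iint IC' bnd unfolding IF_def by (intro Bochner_Integration.integral_norm_bound_integral) auto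
    also have "\<dots> = \<delta> * C" unfolding C_def by simp
    finally show "cmod ((\<Sum>i<n. complex_of_real (\<xi> i) * (Eform R r f g (x (Suc i)) - Eform R r f g (x i))) - ip R r f (NP R r g)) < \<epsilon>"
      using dC by simp
  qed
qed



theorem theorem4p4:
  fixes R r :: real
  assumes "R > 0" and "r > 0"
  shows "\<forall>f \<in> K0 R r. \<forall>g \<in> K0 R r.
           RS_has_integral (\<lambda>t. complex_of_real t) (Eform R r f g) (-1/2) (1/2)
             (ip R r f (NP R r g))"
  using main_RS[OF assms] by blast

end
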